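(* Let $d\ge2$, $b:=2^d$, $N\in\mathbb{N}$, $L:=\min\{\ell\ge0:b^\ell\ge N\}$, and assume $L\ge3$. Let $0\le\ell\le L-3$ and $u\in\{0,\dots,b-1\}^\ell$, write $C_u=\prod_{j=1}^d[A_j,A_j+2^{-\ell})$, and let $R_u=\prod_{j=1}^d[a_j,b_j)$ be a half-open rectangle with $\lambda_d(R_u)=M(u)/N$ and \[ |a_j-A_j|\le S_\ell,\qquad |b_j-(A_j+2^{-\ell})|\le S_\ell\qquad(1\le j\le d). \] Then there exist half-open rectangles $\{R_{u\ast v}\}_{v=0}^{b-1}$ such that: (i) they partition $R_u$ up to Lebesgue-null sets; (ii) $\lambda_d(R_{u\ast v})=M(u\ast v)/N$ for every $v$; (iii) writing $C_{u\ast v}=\prod_{j=1}^d[A_{u\ast v,j},A_{u\ast v,j}+2^{-(\ell+1)})$ and $R_{u\ast v}=\prod_{j=1}^d[a_{u\ast v,j},b_{u\ast v,j})$, one has $|a_{u\ast v,j}-A_{u\ast v,j}|\le S_{\ell+1}$ and $|b_{u\ast v,j}-(A_{u\ast v,j}+2^{-(\ell+1)})|\le S_{\ell+1}$ for all $1\le j\le d$.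
   Context: $\lambda_d$ is Lebesgue measure. $u\ast v$ denotes the word $u$ followed by the digit $v$. For $0\le\ell\le L-3$: $\Delta_\ell:=\frac{2^{2d-3}}{N}2^{\ell(d-1)}$, $S_0:=0$, $S_{\ell+1}:=S_\ell+\Delta_\ell$. $M(w):=\#\{1\le n\le N:x_n\in C_w\}$, where: for $a\in\{0,\dots,b-1\}$, $a=\sum_{j=1}^d\varepsilon_j(a)2^{j-1}$ with $\varepsilon_j(a)\in\{0,1\}$; for $m\ge0$, $m=\sum_{k\ge0}a_k(m)b^k$ in base $b$; $x_n:=\bigl(\sum_{k\ge0}\varepsilon_1(a_k(n-1))2^{-(k+1)},\dots,\sum_{k\ge0}\varepsilon_d(a_k(n-1))2^{-(k+1)}\bigr)$; and for a word $w=(w_0,\dots,w_{\ell-1})$, $C_w:=\prod_{j=1}^d\bigl[\sum_{k=0}^{\ell-1}\varepsilon_j(w_k)2^{-(k+1)},\sum_{k=0}^{\ell-1}\varepsilon_j(w_k)2^{-(k+1)}+2^{-\ell}\bigr)$, with $C_\varnothing=[0,1)^d$. *)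

theory Defs
  imports "HOL-Analysis.Analysis"
begin

definition base :: "nat \<Rightarrow> nat" where
  "base d = 2 ^ d"

definition Lnum :: "nat \<Rightarrow> nat \<Rightarrow> nat" where
  "Lnum d N = (LEAST l. base d ^ l \<ge> N)"

definition eps :: "nat \<Rightarrow> nat \<Rightarrow> nat" where
  "eps j a = (a div 2 ^ (j - 1)) mod 2"

definition bdigit :: "nat \<Rightarrow> nat \<Rightarrow> nat \<Rightarrow> nat" where
  "bdigit d k m = (m div base d ^ k) mod base d"

definition pt :: "nat \<Rightarrow> nat \<Rightarrow> (nat \<Rightarrow> real)" where
  "pt d n = (\<lambda>j\<in>{1..d}. \<Sum>k. real (eps j (bdigit d k (n - 1))) / 2 ^ (k + 1))"

definition corner :: "nat list \<Rightarrow> nat \<Rightarrow> real" where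
  "corner w j = (\<Sum>k<length w. real (eps j (w ! k)) / 2 ^ (k + 1))"

definition cube :: "nat \<Rightarrow> nat list \<Rightarrow> (nat \<Rightarrow> real) set" where
  "cube d w = PiE {1..d} (\<lambda>j. {corner w j ..< corner w j + 1 / 2 ^ length w})"

definition rect :: "nat \<Rightarrow> (nat \<Rightarrow> real) \<Rightarrow> (nat \<Rightarrow> real) \<Rightarrow> (nat \<Rightarrow> real) set" where
  "rect d a b = PiE {1..d} (\<lambda>j. {a j ..< b j})"

definition Mcount :: "nat \<Rightarrow> nat \<Rightarrow> nat list \<Rightarrow> nat" where
  "Mcount d N w = card {n \<in> {1..N}. pt d n \<in> cube d w}"

definition lebd :: "nat \<Rightarrow> (nat \<Rightarrow> real) measure" where
  "lebd d = PiM {1..d} (\<lambda>_. lborel)"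

definition Delta :: "nat \<Rightarrow> nat \<Rightarrow> nat \<Rightarrow> real" where
  "Delta d N l = 2 ^ (2 * d - 3) / real N * 2 ^ (l * (d - 1))"

definition Ssum :: "nat \<Rightarrow> nat \<Rightarrow> nat \<Rightarrow> real" where
  "Ssum d N l = (\<Sum>i<l. Delta d N i)"

end

theory Submission
  imports Defs
begin


lemma rect_sets: "rect d a b \<in> sets (lebd d)"
  unfolding rect_def lebd_def by (intro sets_PiM_I_finite) auto

lemma rect_emeasure:
  assumes "\<forall>j\<in>{1..d}. a j \<le> b j"
  shows "emeasure (lebd d) (rect d a b) = ennreal (\<Prod>j\<in>{1..d}. b j - a j)"
proof -
  interpret product_sigma_finite "\<lambda>_. lborel :: real measure" by standard
  have "emeasure (lebd d) (rect d a b) = (\<Prod>j\<in>{1..d}. emeasure lborel {a j..<b j})"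
    unfolding rect_def lebd_def by (intro emeasure_PiM) auto
  also have "\<dots> = (\<Prod>j\<in>{1..d}. ennreal (b j - a j))"
    using assms by (intro prod.cong) (auto simp: emeasure_lborel_Ico)
  also have "\<dots> = ennreal (\<Prod>j\<in>{1..d}. b j - a j)"
    using assms by (intro prod_ennreal) auto
  finally show ?thesis .
qed

lemma rect_measure:
  assumes "\<forall>j\<in>{1..d}. a j \<le> b j"
  shows "measure (lebd d) (rect d a b) = (\<Prod>j\<in>{1..d}. b j - a j)"
proof -
  have "0 \<le> (\<Prod>j\<in>{1..d}. b j - a j)" using assms by (intro prod_nonneg) auto
  then show ?thesis using rect_emeasure[OF assms] unfolding measure_def by simp
qed



lemma eps_le1: "eps j a \<le> 1"
  unfolding eps_def by simp

lemma eps_bit: "eps j a = (if bit a (j - 1) then 1 else 0)"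
  unfolding eps_def by (simp add: bit_iff_odd odd_iff_mod_2_eq_one)

lemma eq_by_eps:
  fixes a a' :: nat
  assumes "a < 2 ^ d" "a' < 2 ^ d" "\<forall>j\<in>{1..d}. eps j a = eps j a'"
  shows "a = a'"
proof -
  have "bit a n = bit a' n" for n
  proof (cases "n < d")
    case True
    then have "eps (Suc n) a = eps (Suc n) a'" using assms(3) by auto
    then show ?thesis by (simp add: eps_bit split: if_splits)
  next
    case False
    then have "(2::nat) ^ d \<le> 2 ^ n" by (simp add: power_increasing)
    then have "a div 2 ^ n = 0" "a' div 2 ^ n = 0" using assms(1,2)
      by (auto intro!: div_less elim: less_le_trans)
    then show ?thesis by (simp add: bit_iff_odd)
  qed
  then show ?thesis by (intro bit_eqI) blast
qed

lemma dy_bound: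
  assumes "\<forall>k. e k \<le> (1::nat)"
  shows "(\<Sum>k<K. real (e k) / 2 ^ (k + 1)) \<le> 1 - 1 / 2 ^ K"
proof (induction K)
  case 0 then show ?case by simp
next
  case (Suc K)
  have "real (e K) \<le> 1" using assms by auto
  then have "real (e K) / 2 ^ (K + 1) \<le> 1 / 2 ^ (K+1)"
    by (simp add: divide_right_mono)
  moreover have "1 / (2::real) ^ K = 2 * (1 / 2 ^ (K + 1))" by simp
  ultimately show ?case using Suc by simp
qed

lemma dy_nonneg: "0 \<le> (\<Sum>k<K. real (e k) / 2 ^ (k + 1))"
  by (intro sum_nonneg) auto

lemma dyadic:
  fixes e f :: "nat \<Rightarrow> nat"
  assumes "\<forall>k. e k \<le> 1" "\<forall>k. f k \<le> 1" "l \<le> K"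
  shows "((\<Sum>k<l. real (f k) / 2 ^ (k + 1)) \<le> (\<Sum>k<K. real (e k) / 2 ^ (k + 1))
          \<and> (\<Sum>k<K. real (e k) / 2 ^ (k + 1)) < (\<Sum>k<l. real (f k) / 2 ^ (k + 1)) + 1 / 2 ^ l)
         \<longleftrightarrow> (\<forall>k<l. e k = f k)"
  using assms
proof (induction l arbitrary: e f K)
  case 0
  have "(\<Sum>k<K. real (e k) / 2 ^ (k + 1)) \<le> 1 - 1 / 2 ^ K" using dy_bound 0 by blast
  moreover have "(0::real) < 1 / 2 ^ K" by simp
  ultimately have "(\<Sum>k<K. real (e k) / 2 ^ (k + 1)) < 1" by linarith
  then show ?case using dy_nonneg[where K=K and e=e] by simp
next
  case (Suc l)
  then obtain K' where K': "K = Suc K'" "l \<le> K'" by (cases K) auto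
  define s' where "s' = (\<Sum>k<K'. real (e (Suc k)) / 2 ^ (k + 1))"
  define c' where "c' = (\<Sum>k<l. real (f (Suc k)) / 2 ^ (k + 1))"
  have s: "(\<Sum>k<K. real (e k) / 2 ^ (k + 1)) = real (e 0) / 2 + s' / 2"
    unfolding K'(1) s'_def by (subst sum.lessThan_Suc_shift) (simp add: sum_divide_distrib)
  have c: "(\<Sum>k<Suc l. real (f k) / 2 ^ (k + 1)) = real (f 0) / 2 + c' / 2"
    unfolding c'_def by (subst sum.lessThan_Suc_shift) (simp add: sum_divide_distrib)
  have IH: "(c' \<le> s' \<and> s' < c' + 1 / 2 ^ l) \<longleftrightarrow> (\<forall>k<l. e (Suc k) = f (Suc k))"
    unfolding s'_def c'_def using Suc.prems K' by (intro Suc.IH) auto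
  have s'b: "0 \<le> s'" "s' < 1"
  proof -
    have "s' \<le> 1 - 1 / 2 ^ K'"
      unfolding s'_def using dy_bound[of "\<lambda>k. e (Suc k)" K'] Suc.prems by auto
    moreover have "(0::real) < 1 / 2 ^ K'" by simp
    ultimately show "s' < 1" by linarith
    show "0 \<le> s'" unfolding s'_def using dy_nonneg by auto
  qed
  have c'b: "0 \<le> c'" "c' + 1 / 2 ^ l \<le> 1"
    unfolding c'_def using dy_nonneg dy_bound[of "\<lambda>k. f (Suc k)" l] Suc.prems by auto
  have all: "(\<forall>k<Suc l. e k = f k) \<longleftrightarrow> e 0 = f 0 \<and> (\<forall>k<l. e (Suc k) = f (Suc k))"
    by (auto simp: less_Suc_eq_0_disj)
  have e0: "e 0 = 0 \<or> e 0 = 1" and f0: "f 0 = 0 \<or> f 0 = 1" using Suc.prems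
    by (metis le_antisym less_one not_le)+
  have eq: "(real (f 0) / 2 + c' / 2 \<le> real (e 0) / 2 + s' / 2 \<and>
        real (e 0) / 2 + s' / 2 < real (f 0) / 2 + c' / 2 + 1 / 2 ^ Suc l)
        \<longleftrightarrow> (real (f 0) + c' \<le> real (e 0) + s' \<and> real (e 0) + s' < real (f 0) + c' + 1 / 2 ^ l)"
    by (auto simp: field_simps)
  show ?case unfolding s c eq all
    using e0 f0 IH s'b c'b by auto
qed



lemma base_ge2: "d \<ge> 1 \<Longrightarrow> base d \<ge> 2"
  unfolding base_def by (metis power_increasing power_one_right le_refl zero_less_numeral le_add2 one_le_numeral
      nat_1_add_1)

lemma bdigit_lt: "d \<ge> 1 \<Longrightarrow> bdigit d k m < base d"
  unfolding bdigit_def using base_ge2[of d] by simp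

lemma bdigit_zero:
  assumes "m < base d ^ K" "K \<le> k" "d \<ge> 1"
  shows "bdigit d k m = 0"
proof -
  have "base d ^ K \<le> base d ^ k" using assms base_ge2[of d] by (intro power_increasing) auto
  then have "m div base d ^ k = 0" using assms by auto
  then show ?thesis unfolding bdigit_def by simp
qed

lemma pt_finite:
  assumes "j \<in> {1..d}" "m < base d ^ K" "d \<ge> 1"
  shows "pt d (Suc m) j = (\<Sum>k<K. real (eps j (bdigit d k m)) / 2 ^ (k + 1))"
proof -
  have "(\<Sum>k. real (eps j (bdigit d k m)) / 2 ^ (k + 1)) = (\<Sum>k<K. real (eps j (bdigit d k m)) / 2 ^ (k + 1))"
    by (rule suminf_finite) (use bdigit_zero[OF assms(2) _ assms(3)] in \<open>auto simp: eps_def\<close>)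
  then show ?thesis using assms(1) unfolding pt_def by simp
qed

lemma pow_big: "d \<ge> 1 \<Longrightarrow> m < base d ^ m"
proof -
  assume "d \<ge> 1"
  then have "(2::nat) ^ m \<le> base d ^ m" using base_ge2[of d] by (intro power_mono) auto
  moreover have "m < 2 ^ m" by (rule less_exp)
  ultimately show ?thesis by linarith
qed

lemma pt_in_cube:
  assumes "d \<ge> 1" "\<forall>i<length w. w ! i < base d"
  shows "pt d (Suc m) \<in> cube d w \<longleftrightarrow> (\<forall>k<length w. bdigit d k m = w ! k)"
proof -
  define K where "K = max m (length w)"
  have mK: "m < base d ^ K"
  proof -
    have "base d ^ m \<le> base d ^ K" unfolding K_def using base_ge2[of d] assms(1)
      by (intro power_increasing) auto
    then show ?thesis using pow_big[OF assms(1), of m] by linarith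
  qed
  have ext: "pt d (Suc m) \<in> extensional {1..d}" unfolding pt_def by simp
  have "pt d (Suc m) \<in> cube d w \<longleftrightarrow> (\<forall>j\<in>{1..d}. pt d (Suc m) j \<in> {corner w j ..< corner w j + 1 / 2 ^ length w})"
    unfolding cube_def using ext by (auto simp: PiE_iff)
  also have "\<dots> \<longleftrightarrow> (\<forall>j\<in>{1..d}. \<forall>k<length w. eps j (bdigit d k m) = eps j (w ! k))"
  proof (intro ball_cong refl)
    fix j assume j: "j \<in> {1..d}"
    show "pt d (Suc m) j \<in> {corner w j ..< corner w j + 1 / 2 ^ length w} \<longleftrightarrow>
          (\<forall>k<length w. eps j (bdigit d k m) = eps j (w ! k))"
      unfolding pt_finite[OF j mK assms(1)] corner_def atLeastLessThan_iff
      by (rule dyadic) (auto simp: eps_le1[unfolded One_nat_def] K_def)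
  qed
  also have "\<dots> \<longleftrightarrow> (\<forall>k<length w. bdigit d k m = w ! k)"
  proof safe
    fix k assume H: "\<forall>j\<in>{1..d}. \<forall>k<length w. eps j (bdigit d k m) = eps j (w ! k)" and k: "k < length w"
    show "bdigit d k m = w ! k"
      by (rule eq_by_eps[of _ d]) (use H k assms bdigit_lt[of d k m] in \<open>auto simp: base_def\<close>)
  qed auto
  finally show ?thesis .
qed

fun numB :: "nat \<Rightarrow> nat list \<Rightarrow> nat" where
  "numB B [] = 0"
| "numB B (x # xs) = x + B * numB B xs"

lemma numB_lt: "B > 0 \<Longrightarrow> \<forall>i<length w. w ! i < B \<Longrightarrow> numB B w < B ^ length w"
proof (induction w)
  case Nil then show ?case by simp
next
  case (Cons x xs)
  then have x: "x < B" and IH: "numB B xs < B ^ length xs" by (auto simp: nth_Cons_Suc)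
    (metis Suc_mono length_Cons nth_Cons_Suc)
  then have "numB B xs + 1 \<le> B ^ length xs" by simp
  then have "B * (numB B xs + 1) \<le> B * B ^ length xs" by (rule mult_le_mono2)
  moreover have "x + B * numB B xs < B * (numB B xs + 1)" using x by (simp add: algebra_simps)
  ultimately show ?case by simp
qed

lemma digits_mod:
  assumes "d \<ge> 1" "\<forall>i<length w. w ! i < base d"
  shows "(\<forall>k<length w. bdigit d k m = w ! k) \<longleftrightarrow> m mod base d ^ length w = numB (base d) w"
  using assms
proof (induction w arbitrary: m)
  case Nil then show ?case by simp
next
  case (Cons x xs)
  let ?B = "base d"
  have B: "?B \<ge> 2" using base_ge2 Cons.prems by auto
  have x: "x < ?B" and xs: "\<forall>i<length xs. xs ! i < ?B" using Cons.prems by auto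
  have dig: "bdigit d (Suc k) m = bdigit d k (m div ?B)" for k
    unfolding bdigit_def by (simp add: div_mult2_eq)
  have "(\<forall>k<length (x # xs). bdigit d k m = (x # xs) ! k) \<longleftrightarrow>
        m mod ?B = x \<and> (\<forall>k<length xs. bdigit d k (m div ?B) = xs ! k)"
  proof -
    have d0: "bdigit d 0 m = m mod ?B" unfolding bdigit_def by simp
    show ?thesis by (auto simp: less_Suc_eq_0_disj dig d0)
  qed
  also have "\<dots> \<longleftrightarrow> m mod ?B = x \<and> (m div ?B) mod ?B ^ length xs = numB ?B xs"
    using Cons.IH[OF Cons.prems(1) xs] by simp
  also have "\<dots> \<longleftrightarrow> m mod ?B ^ length (x # xs) = numB ?B (x # xs)"
  proof -
    have e: "m mod ?B ^ length (x # xs) = m mod ?B + ?B * ((m div ?B) mod ?B ^ length xs)"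
      by (simp add: mod_mult2_eq)
    have "m mod ?B + ?B * y = x + ?B * t \<longleftrightarrow> m mod ?B = x \<and> y = t" for y t
    proof
      assume h: "m mod ?B + ?B * y = x + ?B * t"
      have "(m mod ?B + ?B * y) mod ?B = m mod ?B" "(x + ?B * t) mod ?B = x" using x by auto
      moreover have "(m mod ?B + ?B * y) div ?B = y" "(x + ?B * t) div ?B = t" using x B by auto
      ultimately show "m mod ?B = x \<and> y = t" using h by metis
    qed auto
    then show ?thesis unfolding e by simp
  qed
  finally show ?case .
qed

lemma count_mod:
  fixes P r N :: nat
  assumes "P > 0" "r < P"
  shows "N div P \<le> card {m\<in>{..<N}. m mod P = r} \<and> card {m\<in>{..<N}. m mod P = r} \<le> N div P + 1"
proof -
  have eq: "{m\<in>{..<N}. m mod P = r} = (\<lambda>t. r + P * t) ` {t. r + P * t < N}"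
  proof (rule subset_antisym; rule subsetI)
    fix m assume "m \<in> {m\<in>{..<N}. m mod P = r}"
    then have h: "m < N" "m mod P = r" by auto
    have "m = r + P * (m div P)" using h(2) by (metis div_mult_mod_eq add.commute mult.commute)
    then show "m \<in> (\<lambda>t. r + P * t) ` {t. r + P * t < N}"
      using h(1) by (intro image_eqI[of _ _ "m div P"]) auto
  qed (use assms in auto)
  have inj: "inj_on (\<lambda>t. r + P * t) {t. r + P * t < N}" using assms by (auto simp: inj_on_def)
  have s1: "{..<N div P} \<subseteq> {t. r + P * t < N}"
  proof (rule subsetI)
    fix t assume "t \<in> {..<N div P}"
    then have "t + 1 \<le> N div P" by simp
    then have "P * (t + 1) \<le> P * (N div P)" by (rule mult_le_mono2)
    also have "\<dots> \<le> N" by simp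
    finally have "r + P * t < N" using assms by (simp add: algebra_simps)
    then show "t \<in> {t. r + P * t < N}" by simp
  qed
  have s2: "{t. r + P * t < N} \<subseteq> {..<N div P + 1}"
  proof (rule subsetI)
    fix t assume "t \<in> {t. r + P * t < N}"
    then have h: "r + P * t < N" by simp
    show "t \<in> {..<N div P + 1}" unfolding lessThan_iff
    proof (rule ccontr)
      assume "\<not> t < N div P + 1"
      then have "N div P + 1 \<le> t" by simp
      then have "P * (N div P + 1) \<le> P * t" by (rule mult_le_mono2)
      moreover have "N < P * (N div P + 1)" using assms
        by (metis add.commute div_mult_mod_eq distrib_left mod_less_divisor mult.commute mult_1 nat_add_left_cancel_less)
      ultimately show False using h by linarith
    qed
  qed
  have "card {..<N div P} \<le> card {t. r + P * t < N}"
    by (rule card_mono) (use s1 s2 finite_subset in auto)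
  moreover have "card {t. r + P * t < N} \<le> card {..<N div P + 1}"
    by (rule card_mono) (use s2 in auto)
  ultimately show ?thesis unfolding eq card_image[OF inj] by simp
qed



definition DS :: "nat \<Rightarrow> nat \<Rightarrow> nat list \<Rightarrow> nat set" where
  "DS d N w = {m\<in>{..<N}. \<forall>k<length w. bdigit d k m = w ! k}"

lemma Mcount_DS:
  assumes "d \<ge> 1" "\<forall>i<length w. w ! i < base d"
  shows "Mcount d N w = card (DS d N w)"
proof -
  have "{n \<in> {1..N}. pt d n \<in> cube d w} = Suc ` DS d N w"
  proof (rule subset_antisym; rule subsetI)
    fix n assume "n \<in> {n \<in> {1..N}. pt d n \<in> cube d w}"
    then have n: "n \<ge> 1" "n \<le> N" "pt d (Suc (n - 1)) \<in> cube d w" by auto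
    then show "n \<in> Suc ` DS d N w" unfolding DS_def using pt_in_cube[OF assms, of "n - 1"]
      by (intro image_eqI[of _ _ "n - 1"]) auto
  next
    fix n assume "n \<in> Suc ` DS d N w"
    then obtain m where "n = Suc m" "m \<in> DS d N w" by auto
    then show "n \<in> {n \<in> {1..N}. pt d n \<in> cube d w}" unfolding DS_def
      using pt_in_cube[OF assms, of m] by auto
  qed
  then show ?thesis unfolding Mcount_def by (simp add: card_image)
qed

lemma Mcount_bounds:
  assumes "d \<ge> 1" "\<forall>i<length w. w ! i < base d"
  shows "N div base d ^ length w \<le> Mcount d N w \<and> Mcount d N w \<le> N div base d ^ length w + 1"
proof -
  have B: "base d ^ length w > 0" using base_ge2[OF assms(1)] by simp
  have "DS d N w = {m\<in>{..<N}. m mod base d ^ length w = numB (base d) w}"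
    unfolding DS_def using digits_mod[OF assms] by simp
  moreover have "numB (base d) w < base d ^ length w"
    using numB_lt[OF _ assms(2)] base_ge2[OF assms(1)] by simp
  ultimately show ?thesis unfolding Mcount_DS[OF assms] using count_mod[OF B] by simp
qed

lemma Mcount_sum:
  assumes "d \<ge> 1" "\<forall>i<length u. u ! i < base d"
  shows "Mcount d N u = (\<Sum>v<base d. Mcount d N (u @ [v]))"
proof -
  have uv: "\<forall>i<length (u @ [v]). (u @ [v]) ! i < base d" if "v < base d" for v
    using assms(2) that by (auto simp: nth_append less_Suc_eq)
  have DSuv: "DS d N (u @ [v]) = {m \<in> DS d N u. bdigit d (length u) m = v}" for v
    unfolding DS_def by (auto simp: nth_append less_Suc_eq)
  have U: "DS d N u = (\<Union>v<base d. DS d N (u @ [v]))"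
    unfolding DSuv using bdigit_lt[OF assms(1)] by auto
  have "card (DS d N u) = (\<Sum>v<base d. card (DS d N (u @ [v])))"
    unfolding U by (rule card_UN_disjoint) (auto simp: DS_def)
  then show ?thesis using Mcount_DS[OF assms] Mcount_DS[OF assms(1) uv] by simp
qed



definition grp :: "nat \<Rightarrow> nat \<Rightarrow> nat \<Rightarrow> nat set" where
  "grp d j v = {w. w < base d \<and> (\<forall>i\<in>{1..<j}. eps i w = eps i v)}"

definition fl :: "nat \<Rightarrow> nat \<Rightarrow> nat" where
  "fl j w = flip_bit (j - 1) w"

lemma finite_grp: "finite (grp d j v)"
  unfolding grp_def by auto

lemma grp_Suc: "j \<ge> 1 \<Longrightarrow> grp d (Suc j) v = {w \<in> grp d j v. eps j w = eps j v}"
  unfolding grp_def by (auto simp: less_Suc_eq)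

lemma grp_one: "grp d 1 v = {..<base d}"
  unfolding grp_def by auto

lemma grp_last: "v < base d \<Longrightarrow> grp d (Suc d) v = {v}"
  unfolding grp_def using eq_by_eps[of _ d v] by (auto simp: base_def)

lemma self_grp: "v < base d \<Longrightarrow> v \<in> grp d j v"
  unfolding grp_def by auto

lemma eps_fl_same: "i \<ge> 1 \<Longrightarrow> j \<ge> 1 \<Longrightarrow> i \<noteq> j \<Longrightarrow> eps i (fl j w) = eps i w"
  unfolding fl_def eps_bit by (auto simp: bit_flip_bit_iff)

lemma eps_fl: "j \<ge> 1 \<Longrightarrow> eps j (fl j w) = 1 - eps j w"
  unfolding fl_def eps_bit by (auto simp: bit_flip_bit_iff)

lemma fl_fl: "fl j (fl j w) = w"
  unfolding fl_def by (rule bit_eqI) (auto simp: bit_flip_bit_iff)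

lemma fl_lt: "j \<in> {1..d} \<Longrightarrow> w < base d \<Longrightarrow> fl j w < base d"
  unfolding fl_def base_def
  by (metis take_bit_nat_eq_self_iff take_bit_flip_bit_eq atLeastAtMost_iff diff_less
        less_le_trans not_le zero_less_one)

lemma fl_grp: "j \<in> {1..d} \<Longrightarrow> w \<in> grp d j v \<Longrightarrow> fl j w \<in> grp d j v"
  unfolding grp_def using fl_lt[of j d w] eps_fl_same[of _ j w] by auto

lemma bij_fl:
  assumes "j \<in> {1..d}"
  shows "bij_betw (fl j) (grp d j v \<inter> {w. eps j w = 0}) (grp d j v - {w. eps j w = 0})"
proof (rule bij_betw_byWitness[where f' = "fl j"])
  show "\<forall>a\<in>grp d j v \<inter> {w. eps j w = 0}. fl j (fl j a) = a" by (simp add: fl_fl)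
  show "\<forall>a\<in>grp d j v - {w. eps j w = 0}. fl j (fl j a) = a" by (simp add: fl_fl)
  show "fl j ` (grp d j v \<inter> {w. eps j w = 0}) \<subseteq> grp d j v - {w. eps j w = 0}"
    using fl_grp[OF assms] eps_fl[of j] assms by auto
  show "fl j ` (grp d j v - {w. eps j w = 0}) \<subseteq> grp d j v \<inter> {w. eps j w = 0}"
  proof
    fix x assume "x \<in> fl j ` (grp d j v - {w. eps j w = 0})"
    then obtain w where w: "x = fl j w" "w \<in> grp d j v" "eps j w \<noteq> 0" by auto
    have "eps j w = 1" using w(3) eps_le1[of j w] by simp
    then show "x \<in> grp d j v \<inter> {w. eps j w = 0}"
      using w fl_grp[OF assms] eps_fl[of j w] assms by auto
  qed
qed

lemma ratio_bound:
  fixes M :: "nat \<Rightarrow> real" and q :: real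
  assumes "finite A" "A \<noteq> {}" "q > 0"
    and "\<forall>w\<in>A. q \<le> M w \<and> M w \<le> q + 1" "\<forall>w\<in>A. q \<le> M (g w) \<and> M (g w) \<le> q + 1"
  shows "\<bar>(\<Sum>w\<in>A. M w) / ((\<Sum>w\<in>A. M w) + (\<Sum>w\<in>A. M (g w))) - 1 / 2\<bar> \<le> 1 / (4 * q)"
proof -
  define X where "X = (\<Sum>w\<in>A. M w)"
  define Y where "Y = (\<Sum>w\<in>A. M (g w))"
  define n where "n = real (card A)"
  have n: "n > 0" unfolding n_def using assms by auto
  have "\<bar>X - Y\<bar> = \<bar>\<Sum>w\<in>A. M w - M (g w)\<bar>" unfolding X_def Y_def by (simp add: sum_subtractf)
  also have "\<dots> \<le> (\<Sum>w\<in>A. \<bar>M w - M (g w)\<bar>)" by (rule sum_abs)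
  also have "\<dots> \<le> (\<Sum>w\<in>A. 1)" using assms(4,5) by (intro sum_mono) (fastforce simp: abs_le_iff)
  finally have XY: "\<bar>X - Y\<bar> \<le> n" unfolding n_def by simp
  have "(\<Sum>w\<in>A. 2 * q) \<le> X + Y" unfolding X_def Y_def sum.distrib[symmetric]
    using assms(4,5) by (intro sum_mono) fastforce
  then have S: "2 * q * n \<le> X + Y" unfolding n_def by (simp add: mult.commute)
  have pos: "X + Y > 0" using S n assms(3) by (smt (verit) mult_pos_pos)
  have "X / (X + Y) - 1 / 2 = (X - Y) / (2 * (X + Y))" using pos by (simp add: field_simps)
  then have "\<bar>X / (X + Y) - 1 / 2\<bar> = \<bar>X - Y\<bar> / (2 * (X + Y))" using pos by simp
  also have "\<dots> \<le> n / (2 * (2 * q * n))"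
    using XY S pos n assms(3) by (intro frac_le) auto
  also have "\<dots> = 1 / (4 * q)" using n by (simp add: field_simps)
  finally show ?thesis unfolding X_def Y_def .
qed



definition KK :: "(nat \<Rightarrow> real) \<Rightarrow> nat \<Rightarrow> nat \<Rightarrow> nat \<Rightarrow> real" where
  "KK M d j v = (\<Sum>w\<in>grp d j v. M w)"

definition K0 :: "(nat \<Rightarrow> real) \<Rightarrow> nat \<Rightarrow> nat \<Rightarrow> nat \<Rightarrow> real" where
  "K0 M d j v = (\<Sum>w\<in>grp d j v \<inter> {w. eps j w = 0}. M w)"

locale Mb =
  fixes M :: "nat \<Rightarrow> real" and d :: nat and q :: real
  assumes Mb: "\<And>w. w < base d \<Longrightarrow> q \<le> M w \<and> M w \<le> q + 1" and qpos: "q > 0"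
begin

lemma M_pos: "w < base d \<Longrightarrow> M w > 0"
  using Mb qpos by force

lemma M_nonneg_grp: "w \<in> grp d j v \<Longrightarrow> 0 \<le> M w"
  using M_pos unfolding grp_def by force

lemma KK_pos: "v < base d \<Longrightarrow> KK M d j v > 0"
proof -
  assume v: "v < base d"
  have "M v \<le> KK M d j v" unfolding KK_def
    by (rule member_le_sum) (use self_grp[OF v] finite_grp M_nonneg_grp in auto)
  then show ?thesis using M_pos[OF v] by linarith
qed

lemma K0_bounds: "0 \<le> K0 M d j v \<and> K0 M d j v \<le> KK M d j v"
  unfolding K0_def KK_def using M_nonneg_grp
  by (auto intro!: sum_nonneg sum_mono2 finite_grp)

lemma KK_split: "KK M d j v = K0 M d j v + (\<Sum>w\<in>grp d j v - {w. eps j w = 0}. M w)"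
  unfolding KK_def K0_def by (rule sum.Int_Diff[OF finite_grp])

lemma KK_Suc:
  assumes "j \<ge> 1"
  shows "KK M d (Suc j) v = (if eps j v = 0 then K0 M d j v else KK M d j v - K0 M d j v)"
proof (cases "eps j v = 0")
  case True
  then show ?thesis unfolding KK_def K0_def grp_Suc[OF assms] by (auto intro!: sum.cong)
next
  case False
  then have e1: "eps j v = 1" using eps_le1[of j v] by simp
  have "grp d (Suc j) v = grp d j v - {w. eps j w = 0}"
    unfolding grp_Suc[OF assms] using e1 eps_le1[of j] by (force simp: le_Suc_eq)
  then show ?thesis using False KK_split unfolding KK_def by simp
qed

lemma ratio:
  assumes "j \<in> {1..d}" "v < base d"
  shows "\<bar>K0 M d j v / KK M d j v - 1 / 2\<bar> \<le> 1 / (4 * q)"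
proof -
  let ?A = "grp d j v \<inter> {w. eps j w = 0}"
  have b: "bij_betw (fl j) ?A (grp d j v - {w. eps j w = 0})" by (rule bij_fl[OF assms(1)])
  have s1: "(\<Sum>w\<in>grp d j v - {w. eps j w = 0}. M w) = (\<Sum>w\<in>?A. M (fl j w))"
    using sum.reindex_bij_betw[OF b, of M] by simp
  have ne: "?A \<noteq> {}"
  proof (cases "eps j v = 0")
    case True then show ?thesis using self_grp[OF assms(2)] by auto
  next
    case False
    then have "eps j v = 1" using eps_le1[of j v] by simp
    then show ?thesis using fl_grp[OF assms(1) self_grp[OF assms(2)]] eps_fl[of j v] assms(1) by auto
  qed
  have inA: "w \<in> ?A \<Longrightarrow> w < base d" for w unfolding grp_def by auto
  have inA2: "w \<in> ?A \<Longrightarrow> fl j w < base d" for w using fl_lt[OF assms(1)] inA by auto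
  have "\<bar>(\<Sum>w\<in>?A. M w) / ((\<Sum>w\<in>?A. M w) + (\<Sum>w\<in>?A. M (fl j w))) - 1 / 2\<bar> \<le> 1 / (4 * q)"
    by (rule ratio_bound) (use ne qpos Mb inA inA2 finite_grp in auto)
  then show ?thesis unfolding KK_split s1 by (simp add: K0_def)
qed

end

lemma prod_telescope:
  fixes f :: "nat \<Rightarrow> real"
  assumes "\<forall>j\<in>{1..Suc n}. f j \<noteq> 0"
  shows "(\<Prod>j\<in>{1..n}. f (Suc j) / f j) = f (Suc n) / f 1"
  using assms
proof (induction n)
  case 0 then show ?case by simp
next
  case (Suc n)
  have "(\<Prod>j\<in>{1..Suc n}. f (Suc j) / f j) = (\<Prod>j\<in>{1..n}. f (Suc j) / f j) * (f (Suc (Suc n)) / f (Suc n))"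
    by (simp add: prod.nat_ivl_Suc')
  also have "\<dots> = f (Suc n) / f 1 * (f (Suc (Suc n)) / f (Suc n))" using Suc by simp
  also have "\<dots> = f (Suc (Suc n)) / f 1" using Suc.prems by simp
  finally show ?case .
qed



lemma numlem:
  fixes x h D q y r :: real
  assumes "0 \<le> x" "x \<le> h + 2 * D" "\<bar>r\<bar> \<le> 1 / (4 * q)" "y - 1 \<le> q" "4 \<le> y"
    "h \<le> 2 * y * D" "0 \<le> D" "0 < q"
  shows "x * \<bar>r\<bar> \<le> D"
proof -
  have "x * \<bar>r\<bar> \<le> (h + 2 * D) * (1 / (4 * q))"
    using assms by (intro mult_mono) auto
  also have "\<dots> = (h + 2 * D) / (4 * q)" by simp
  also have "\<dots> \<le> D"
  proof -
    have "(y - 1) * D \<le> q * D" using assms by (intro mult_right_mono) auto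
    then have 1: "y * D - D \<le> q * D" by (simp add: algebra_simps)
    have "4 * D \<le> y * D" using assms by (intro mult_right_mono) auto
    moreover have "h \<le> 2 * (y * D)" using assms(6) by (simp add: algebra_simps)
    ultimately have "h + 2 * D \<le> 4 * (q * D)" using 1 assms(7) by linarith
    then have "h + 2 * D \<le> D * (4 * q)" by (simp add: algebra_simps)
    then show ?thesis using assms(8) by (simp add: divide_le_eq)
  qed
  finally show ?thesis .
qed

lemma geo_le:
  fixes x :: real
  assumes "x \<ge> 2"
  shows "(\<Sum>i<l. x ^ i) \<le> x ^ l"
proof (induction l)
  case 0 then show ?case by simp
next
  case (Suc l)
  have "x ^ l + x ^ l \<le> x * x ^ l" using assms
    by (metis mult_2 mult_right_mono zero_le_power order_trans zero_le_numeral)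
  then show ?case using Suc by simp
qed

lemma Ssum_le_Delta:
  assumes "d \<ge> 2"
  shows "Ssum d N l \<le> Delta d N l"
proof -
  define C :: real where "C = 2 ^ (2 * d - 3) / real N"
  have C: "C \<ge> 0" unfolding C_def by simp
  have p: "(2::real) ^ (i * (d - 1)) = (2 ^ (d - 1)) ^ i" for i by (metis mult.commute power_mult)
  have x: "(2::real) ^ (d - 1) \<ge> 2"
  proof -
    have "(2::real) ^ 1 \<le> 2 ^ (d - 1)" using assms by (intro power_increasing) auto
    then show ?thesis by simp
  qed
  have "Ssum d N l = C * (\<Sum>i<l. (2 ^ (d - 1)) ^ i)"
    unfolding Ssum_def Delta_def C_def p by (simp add: sum_distrib_left)
  also have "\<dots> \<le> C * (2 ^ (d - 1)) ^ l" using geo_le[OF x] C by (intro mult_left_mono) auto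
  also have "\<dots> = Delta d N l" unfolding Delta_def C_def p by simp
  finally show ?thesis .
qed

lemma Delta_nonneg: "Delta d N l \<ge> 0"
  unfolding Delta_def by simp

lemma Ssum_Suc: "Ssum d N (Suc l) = Ssum d N l + Delta d N l"
  unfolding Ssum_def by simp

lemma Delta_big:
  assumes "d \<ge> 2" "N > 0"
  shows "1 / 2 ^ l \<le> 2 * (real N / real (base d ^ Suc l)) * Delta d N l"
proof -
  obtain e where e: "d = e + 2" using assms(1) by (metis add.commute le_Suc_ex)
  have "(2::nat) ^ (d * Suc l) \<le> 2 ^ (1 + (2 * d - 3) + l * (d - 1) + l)"
    by (intro power_increasing) (auto simp: e algebra_simps)
  then have "real ((2::nat) ^ (d * Suc l)) \<le> real (2 ^ (1 + (2 * d - 3) + l * (d - 1) + l))"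
    by (simp only: of_nat_le_iff)
  then have ineq: "(2::real) ^ (d * Suc l) \<le> 2 * 2 ^ (2 * d - 3) * 2 ^ (l * (d - 1)) * 2 ^ l"
    by (simp add: power_add)
  have P: "real (base d ^ Suc l) = 2 ^ (d * Suc l)" unfolding base_def by (simp add: power_mult power_add)
  have "2 * (real N / real (base d ^ Suc l)) * Delta d N l
      = 2 * 2 ^ (2 * d - 3) * 2 ^ (l * (d - 1)) / 2 ^ (d * Suc l)"
    unfolding P Delta_def using assms(2) by (simp add: field_simps)
  moreover have "1 / 2 ^ l \<le> 2 * 2 ^ (2 * d - 3) * 2 ^ (l * (d - 1)) / (2::real) ^ (d * Suc l)"
    using ineq by (simp add: field_simps)
  ultimately show ?thesis by simp
qed

lemma corner_snoc:
  assumes "length u = l"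
  shows "corner (u @ [v]) j = corner u j + real (eps j v) / 2 ^ Suc l"
  unfolding corner_def using assms by (simp add: nth_append)



theorem lemma2p8:
  fixes d N l :: nat and u :: "nat list" and a b :: "nat \<Rightarrow> real"
  assumes "d \<ge> 2"
    and "Lnum d N \<ge> 3"
    and "l \<le> Lnum d N - 3"
    and "length u = l" and "\<forall>i<l. u ! i < base d"
    and "\<forall>j\<in>{1..d}. a j \<le> b j"
    and "measure (lebd d) (rect d a b) = real (Mcount d N u) / real N"
    and "\<forall>j\<in>{1..d}. \<bar>a j - corner u j\<bar> \<le> Ssum d N l
                 \<and> \<bar>b j - (corner u j + 1 / 2 ^ l)\<bar> \<le> Ssum d N l"
  shows "\<exists>a' b' :: nat \<Rightarrow> nat \<Rightarrow> real.
     (\<forall>v<base d. \<forall>j\<in>{1..d}. a' v j \<le> b' v j)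
   \<and> (\<forall>v<base d. \<forall>v'<base d. v \<noteq> v' \<longrightarrow>
          rect d (a' v) (b' v) \<inter> rect d (a' v') (b' v') \<in> null_sets (lebd d))
   \<and> rect d a b - (\<Union>v<base d. rect d (a' v) (b' v)) \<in> null_sets (lebd d)
   \<and> (\<Union>v<base d. rect d (a' v) (b' v)) - rect d a b \<in> null_sets (lebd d)
   \<and> (\<forall>v<base d. measure (lebd d) (rect d (a' v) (b' v))
                  = real (Mcount d N (u @ [v])) / real N)
   \<and> (\<forall>v<base d. \<forall>j\<in>{1..d}.
        \<bar>a' v j - corner (u @ [v]) j\<bar> \<le> Ssum d N (Suc l)
      \<and> \<bar>b' v j - (corner (u @ [v]) j + 1 / 2 ^ Suc l)\<bar> \<le> Ssum d N (Suc l))"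
proof -
  let ?B = "base d"
  have d1: "d \<ge> 1" using assms(1) by simp
  have B4: "?B \<ge> 4"
  proof -
    have "(2::nat) ^ 2 \<le> 2 ^ d" using assms(1) by (intro power_increasing) auto
    then show ?thesis unfolding base_def by simp
  qed
  have uB: "\<forall>i<length u. u ! i < ?B" using assms(4,5) by simp
  have uvB: "\<forall>i<length (u @ [v]). (u @ [v]) ! i < ?B" if "v < ?B" for v
    using uB that by (auto simp: nth_append less_Suc_eq)
  define P where "P = ?B ^ Suc l"
  have Ppos: "P > 0" unfolding P_def using B4 by simp
  define q where "q = N div P"
  define M where "M = (\<lambda>w. real (Mcount d N (u @ [w])))"
  have Mq: "real q \<le> M w \<and> M w \<le> real q + 1" if "w < ?B" for w
    using Mcount_bounds[OF d1 uvB[OF that], of N] assms(4) unfolding M_def q_def P_def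
    by simp
  have NP: "?B * P < N"
  proof -
    have "l + 2 < Lnum d N" using assms(2,3) by linarith
    then have "\<not> (?B ^ (l + 2) \<ge> N)" unfolding Lnum_def by (rule not_less_Least)
    moreover have "?B ^ (l + 2) = ?B * P" unfolding P_def by simp
    ultimately show ?thesis by (metis not_le)
  qed
  have Npos: "N > 0" using NP by simp
  have qB: "?B \<le> q"
  proof -
    have "(?B * P) div P \<le> N div P" using NP by (intro div_le_mono) simp
    then show ?thesis unfolding q_def using Ppos by simp
  qed
  have qpos: "real q > 0" using qB B4 by simp
  have yq: "real N / real P - 1 \<le> real q"
  proof -
    have "N < P * (q + 1)" unfolding q_def using Ppos
      by (metis add.commute div_mult_mod_eq distrib_left mod_less_divisor mult.commute mult_1 nat_add_left_cancel_less)
    then have "real N < real P * (real q + 1)" by (metis of_nat_add of_nat_less_iff of_nat_mult of_nat_1)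
    then show ?thesis using Ppos by (simp add: field_simps)
  qed
  have y4: "4 \<le> real N / real P"
  proof -
    have "real (?B * P) \<le> real N" using NP by (simp only: of_nat_le_iff less_imp_le)
    then have "real ?B \<le> real N / real P" using Ppos by (simp add: field_simps)
    moreover have "(4::real) \<le> real ?B" using B4 by simp
    ultimately show ?thesis by linarith
  qed
  have Mu: "real (Mcount d N u) = (\<Sum>v<?B. M v)"
    unfolding M_def using Mcount_sum[OF d1 uB, of N] by simp
  interpret Mb M d "real q" using Mq qpos by unfold_locales auto
  have KK1: "KK M d 1 v = real (Mcount d N u)" for v unfolding KK_def grp_one Mu by simp
  have KKlast: "KK M d (Suc d) v = M v" if "v < ?B" for v unfolding KK_def grp_last[OF that] by simp
  have Mupos: "real (Mcount d N u) > 0"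
  proof -
    have "KK M d 1 0 > 0" using KK_pos[of 0 1] B4 by simp
    then show ?thesis using KK1[of 0] by linarith
  qed
  define c where "c = (\<lambda>j v. a j + (b j - a j) * (K0 M d j v / KK M d j v))"
  define a' where "a' = (\<lambda>v j. if eps j v = 0 then a j else c j v)"
  define b' where "b' = (\<lambda>v j. if eps j v = 0 then c j v else b j)"
  have r01: "0 \<le> K0 M d j v / KK M d j v \<and> K0 M d j v / KK M d j v \<le> 1" if "v < ?B" for j v
    using K0_bounds[of j v] KK_pos[OF that, of j] by auto
  have cab: "a j \<le> c j v \<and> c j v \<le> b j" if "v < ?B" "j \<in> {1..d}" for j v
  proof -
    have ab: "0 \<le> b j - a j" using assms(6) that by auto
    have "0 \<le> (b j - a j) * (K0 M d j v / KK M d j v)" using r01[OF that(1), of j] ab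
      by (intro mult_nonneg_nonneg) auto
    moreover have "(b j - a j) * (K0 M d j v / KK M d j v) \<le> (b j - a j) * 1"
      using r01[OF that(1)] ab by (intro mult_left_mono) auto
    ultimately show ?thesis unfolding c_def by simp
  qed
  have ab': "a' v j \<le> b' v j" if "v < ?B" "j \<in> {1..d}" for v j
    using cab[OF that] assms(6) that unfolding a'_def b'_def by auto
  have disj: "rect d (a' v) (b' v) \<inter> rect d (a' v') (b' v') = {}"
    if v: "v < ?B" "v' < ?B" "v \<noteq> v'" for v v'
  proof -
    have "\<exists>j\<in>{1..d}. eps j v \<noteq> eps j v'"
      using eq_by_eps[of v d v'] v unfolding base_def by auto
    then obtain j0 where j0: "j0 \<in> {1..d}" "eps j0 v \<noteq> eps j0 v'" by blast
    define j where "j = (LEAST j. 1 \<le> j \<and> eps j v \<noteq> eps j v')"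
    have jP: "1 \<le> j \<and> eps j v \<noteq> eps j v'" unfolding j_def
      by (rule LeastI[of _ j0]) (use j0 in auto)
    have jle: "j \<le> j0" unfolding j_def by (rule Least_le) (use j0 in auto)
    have jm: "\<forall>i\<in>{1..<j}. eps i v = eps i v'"
      using not_less_Least[of _ "\<lambda>j. 1 \<le> j \<and> eps j v \<noteq> eps j v'"] unfolding j_def[symmetric] by auto
    have jd: "j \<in> {1..d}" using jP jle j0 by auto
    have g: "grp d j v = grp d j v'" unfolding grp_def using jm by auto
    have ceq: "c j v = c j v'" unfolding c_def KK_def K0_def g ..
    show ?thesis
    proof (rule ccontr)
      assume "rect d (a' v) (b' v) \<inter> rect d (a' v') (b' v') \<noteq> {}"
      then obtain x where "x \<in> rect d (a' v) (b' v)" "x \<in> rect d (a' v') (b' v')" by blast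
      then have "x j \<in> {a' v j..<b' v j}" "x j \<in> {a' v' j..<b' v' j}"
        unfolding rect_def using jd by (auto simp: PiE_iff)
      then show False using jP ceq eps_le1[of j v] eps_le1[of j v'] unfolding a'_def b'_def
        by (auto split: if_splits)
    qed
  qed
  have sub: "rect d (a' v) (b' v) \<subseteq> rect d a b" if "v < ?B" for v
    unfolding rect_def
  proof (rule PiE_mono)
    fix j assume "j \<in> {1..d}"
    then show "{a' v j..<b' v j} \<subseteq> {a j..<b j}"
      using cab[OF that] assms(6) unfolding a'_def b'_def by auto
  qed
  have side: "b' v j - a' v j = (b j - a j) * (KK M d (Suc j) v / KK M d j v)"
    if "v < ?B" "j \<in> {1..d}" for v j
  proof -
    have KKp: "KK M d j v > 0" using KK_pos[OF that(1)] by simp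
    have j1: "j \<ge> 1" using that by simp
    show ?thesis
    proof (cases "eps j v = 0")
      case True then show ?thesis unfolding a'_def b'_def c_def KK_Suc[OF j1] by simp
    next
      case False
      then have "b' v j - a' v j = (b j - a j) * (1 - K0 M d j v / KK M d j v)"
        unfolding a'_def b'_def c_def by (simp add: algebra_simps)
      also have "1 - K0 M d j v / KK M d j v = (KK M d j v - K0 M d j v) / KK M d j v"
        using KKp by (simp add: field_simps)
      finally show ?thesis unfolding KK_Suc[OF j1] using False by simp
    qed
  qed
  have vol: "measure (lebd d) (rect d (a' v) (b' v)) = M v / real N" if "v < ?B" for v
  proof -
    have "measure (lebd d) (rect d (a' v) (b' v)) = (\<Prod>j\<in>{1..d}. b' v j - a' v j)"
      using ab'[OF that] by (intro rect_measure) auto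
    also have "\<dots> = (\<Prod>j\<in>{1..d}. (b j - a j) * (KK M d (Suc j) v / KK M d j v))"
      using side[OF that] by (intro prod.cong) auto
    also have "\<dots> = (\<Prod>j\<in>{1..d}. b j - a j) * (\<Prod>j\<in>{1..d}. KK M d (Suc j) v / KK M d j v)"
      by (rule prod.distrib)
    also have "(\<Prod>j\<in>{1..d}. KK M d (Suc j) v / KK M d j v) = KK M d (Suc d) v / KK M d 1 v"
      using KK_pos[OF that] by (intro prod_telescope) (metis less_irrefl)
    also have "(\<Prod>j\<in>{1..d}. b j - a j) = real (Mcount d N u) / real N"
      using assms(7) rect_measure[OF assms(6)] by simp
    finally show ?thesis unfolding KKlast[OF that] KK1 using Mupos by simp
  qed
  have emv: "emeasure (lebd d) (rect d (a' v) (b' v)) = ennreal (M v / real N)" if "v < ?B" for v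
  proof -
    have "emeasure (lebd d) (rect d (a' v) (b' v)) = ennreal (\<Prod>j\<in>{1..d}. b' v j - a' v j)"
      using ab'[OF that] by (intro rect_emeasure) auto
    also have "(\<Prod>j\<in>{1..d}. b' v j - a' v j) = measure (lebd d) (rect d (a' v) (b' v))"
      using ab'[OF that] by (intro rect_measure[symmetric]) auto
    finally show ?thesis using vol[OF that] by simp
  qed
  have emR: "emeasure (lebd d) (rect d a b) = ennreal (real (Mcount d N u) / real N)"
    using rect_emeasure[OF assms(6)] rect_measure[OF assms(6)] assms(7) by simp
  define U where "U = (\<Union>v<?B. rect d (a' v) (b' v))"
  have Usets: "U \<in> sets (lebd d)" unfolding U_def by (intro sets.finite_UN) (auto simp: rect_sets)
  have emU: "emeasure (lebd d) U = ennreal (real (Mcount d N u) / real N)"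
  proof -
    have "emeasure (lebd d) U = (\<Sum>v<?B. emeasure (lebd d) (rect d (a' v) (b' v)))"
      unfolding U_def
      by (rule sum_emeasure[symmetric]) (auto simp: rect_sets disjoint_family_on_def disj)
    also have "\<dots> = (\<Sum>v<?B. ennreal (M v / real N))" by (intro sum.cong) (auto simp: emv)
    also have "\<dots> = ennreal (\<Sum>v<?B. M v / real N)"
      using M_pos by (intro sum_ennreal) (simp add: less_imp_le)
    also have "(\<Sum>v<?B. M v / real N) = real (Mcount d N u) / real N"
      unfolding Mu by (simp add: sum_divide_distrib)
    finally show ?thesis .
  qed
  have UR: "U \<subseteq> rect d a b" unfolding U_def using sub by auto
  have null1: "rect d a b - U \<in> null_sets (lebd d)"
  proof (rule null_setsI)
    show "rect d a b - U \<in> sets (lebd d)" using Usets rect_sets by auto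
    have "emeasure (lebd d) (rect d a b - U) = emeasure (lebd d) (rect d a b) - emeasure (lebd d) U"
      by (rule emeasure_Diff) (use emU Usets rect_sets UR in auto)
    then show "emeasure (lebd d) (rect d a b - U) = 0" using emR emU by simp
  qed
  have null2: "U - rect d a b \<in> null_sets (lebd d)"
  proof -
    have e: "U - rect d a b = {}" using UR by auto
    have "{} \<in> null_sets (lebd d)" by (rule null_setsI) auto
    then show ?thesis unfolding e .
  qed
  define S where "S = Ssum d N l"
  define D where "D = Delta d N l"
  have SD: "S \<le> D" "0 \<le> D" "Ssum d N (Suc l) = S + D"
    unfolding S_def D_def using Ssum_le_Delta[OF assms(1)] Delta_nonneg Ssum_Suc by auto
  have hD: "1 / 2 ^ l \<le> 2 * (real N / real P) * D"
    unfolding D_def P_def using Delta_big[OF assms(1) Npos] by simp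
  have cdev: "\<bar>c j v - (corner u j + 1 / 2 ^ Suc l)\<bar> \<le> S + D" if "v < ?B" "j \<in> {1..d}" for v j
  proof -
    define r where "r = K0 M d j v / KK M d j v"
    define A where "A = corner u j"
    define h :: real where "h = 1 / 2 ^ l"
    have a8: "\<bar>a j - A\<bar> \<le> S" "\<bar>b j - (A + h)\<bar> \<le> S"
      using assms(8) that(2) unfolding S_def A_def h_def by auto
    have rb: "\<bar>r - 1 / 2\<bar> \<le> 1 / (4 * real q)" unfolding r_def by (rule ratio[OF that(2,1)])
    have x0: "0 \<le> b j - a j" using assms(6) that by auto
    have xb: "b j - a j \<le> h + 2 * D" using a8 SD by (simp add: abs_le_iff)
    have main: "(b j - a j) * \<bar>r - 1 / 2\<bar> \<le> D"
      by (rule numlem[OF x0 xb rb yq y4 _ SD(2) qpos]) (use hD h_def in simp)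
    have eq: "c j v - (A + h / 2) = (a j - A) / 2 + (b j - (A + h)) / 2 + (b j - a j) * (r - 1 / 2)"
      unfolding c_def r_def by (simp add: field_simps)
    have "\<bar>(b j - a j) * (r - 1 / 2)\<bar> = (b j - a j) * \<bar>r - 1 / 2\<bar>" using x0 by (simp add: abs_mult)
    then have X: "\<bar>(b j - a j) * (r - 1 / 2)\<bar> \<le> D" using main by simp
    have gen: "\<bar>p\<bar> \<le> S \<Longrightarrow> \<bar>p'\<bar> \<le> S \<Longrightarrow> \<bar>X\<bar> \<le> D \<Longrightarrow> \<bar>p / 2 + p' / 2 + X\<bar> \<le> S + D"
      for p p' X :: real by (simp add: abs_le_iff)
    have "\<bar>c j v - (A + h / 2)\<bar> \<le> S + D" unfolding eq by (rule gen[OF a8 X])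
    moreover have "h / 2 = 1 / 2 ^ Suc l" unfolding h_def by simp
    ultimately show ?thesis unfolding A_def by simp
  qed
  have dev: "\<bar>a' v j - corner (u @ [v]) j\<bar> \<le> Ssum d N (Suc l)
      \<and> \<bar>b' v j - (corner (u @ [v]) j + 1 / 2 ^ Suc l)\<bar> \<le> Ssum d N (Suc l)"
    if "v < ?B" "j \<in> {1..d}" for v j
  proof -
    have a8: "\<bar>a j - corner u j\<bar> \<le> S" "\<bar>b j - (corner u j + 1 / 2 ^ l)\<bar> \<le> S"
      using assms(8) that(2) unfolding S_def by auto
    have cs: "corner (u @ [v]) j = corner u j + real (eps j v) / 2 ^ Suc l"
      by (rule corner_snoc[OF assms(4)])
    show ?thesis
    proof (cases "eps j v = 0")
      case True
      then show ?thesis unfolding a'_def b'_def cs SD(3) using a8 SD cdev[OF that] by simp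
    next
      case False
      then have e1: "eps j v = 1" using eps_le1[of j v] by simp
      have h2: "(1::real) / 2 ^ Suc l + 1 / 2 ^ Suc l = 1 / 2 ^ l" by simp
      have "b j - (corner u j + 1 / 2 ^ Suc l + 1 / 2 ^ Suc l) = b j - (corner u j + 1 / 2 ^ l)"
        using h2 by (simp add: algebra_simps)
      then show ?thesis unfolding a'_def b'_def cs SD(3) using False e1 a8 SD cdev[OF that] by simp
    qed
  qed
  show ?thesis
    apply (rule exI[of _ a'], rule exI[of _ b'])
    using ab' disj null1 null2 vol dev unfolding U_def M_def by auto
qed

end
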